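(* If $(c_1,c_2,z,\Omega)$ is $P$-stable, then $\Theta^{c_1,c_2}_r(z;\Omega)$ is independent of $r$ (for $\operatorname{Re}(r)>-1$).
   Context: Let $P$ be a $g\times g$ integer matrix with $\det P=\pm1$. Let $z\in\mathbb{C}^g$, let $\Omega$ be a complex symmetric $g\times g$ matrix with $M=\operatorname{Im}(\Omega)$ of signature $(g-1,1)$, and let $c_1,c_2\in\mathbb{R}^g$ with $c_j^\top Mc_j<0$. The quadruple $(c_1,c_2,z,\Omega)$ is called $P$-stable if $P^\top\Omega P=\Omega$, $Pc_1=c_2$, and $P^\top z\equiv z \pmod{\mathbb{Z}^g}$. For a continuous test function $f$ of one real variable, set $\mathcal{E}_f(\alpha)=\int_0^\alpha f(u)e^{-\pi u^2}\,du$ and $\Theta^{c_1,c_2}[f](z;\Omega)=\sum_{n\in\mathbb{Z}^g}\Big[\mathcal{E}_f\Big(\frac{c^\top \operatorname{Im}(\Omega n+z)}{\sqrt{-\frac12 c^\top Mc}}\Big)\Big]_{c=c_1}^{c_2} e\big(\tfrac12 n^\top\Omega n+n^\top z\big)$, where $e(x)=\exp(2\pi i x)$, $[h(c)]_{c=c_1}^{c_2}=h(c_2)-h(c_1)$, and the square root is the positive one. For $\operatorname{Re}(r)>-1$, define $\Theta^{c_1,c_2}_r(z;\Omega)=\frac{\pi^{(r+1)/2}}{\Gamma\left(\frac{r+1}{2}\right)}\Theta^{c_1,c_2}[f](z;\Omega)$ with $f(u)=|u|^r$. *)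

theory Defs
  imports "HOL-Analysis.Analysis"
begin

text \<open>Conventions: vectors in C^g, R^g, Z^g are modelled as real^'g etc. for a finite index type 'g
  (g = CARD('g)); matrices as (_^'g^'g).\<close>

definition e :: "complex \<Rightarrow> complex" where
  "e x = exp (2 * of_real pi * \<i> * x)"

definition ImMat :: "complex^'g^'g \<Rightarrow> real^'g^'g" where
  "ImMat \<Omega> = (\<chi> i j. Im (\<Omega> $ i $ j))"

definition has_signature :: "real^'g^'g \<Rightarrow> nat \<Rightarrow> nat \<Rightarrow> bool" where
  "has_signature M p q \<longleftrightarrow> transpose M = M \<and>
     (\<exists>Q d. orthogonal_matrix Q \<and> transpose Q ** M ** Q = (\<chi> i j. if i = j then d $ i else 0)
            \<and> card {i. d $ i > 0} = p \<and> card {i. d $ i < 0} = q)"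

definition qform :: "real^'g^'g \<Rightarrow> real^'g \<Rightarrow> real" where
  "qform M c = (\<Sum>i\<in>UNIV. \<Sum>j\<in>UNIV. c $ i * M $ i $ j * c $ j)"

definition int_to_cmat :: "int^'g^'g \<Rightarrow> complex^'g^'g" where
  "int_to_cmat P = (\<chi> i j. of_int (P $ i $ j))"

definition int_to_rmat :: "int^'g^'g \<Rightarrow> real^'g^'g" where
  "int_to_rmat P = (\<chi> i j. of_int (P $ i $ j))"

definition P_stable :: "int^'g^'g \<Rightarrow> real^'g \<Rightarrow> real^'g \<Rightarrow> complex^'g \<Rightarrow> complex^'g^'g \<Rightarrow> bool" where
  "P_stable P c1 c2 z \<Omega> \<longleftrightarrow>
     transpose (int_to_cmat P) ** \<Omega> ** int_to_cmat P = \<Omega> \<and>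
     int_to_rmat P *v c1 = c2 \<and>
     (\<forall>i. (transpose (int_to_cmat P) *v z - z) $ i \<in> \<int>)"

definition Ecal :: "(real \<Rightarrow> complex) \<Rightarrow> real \<Rightarrow> complex" where
  "Ecal f \<alpha> = interval_lebesgue_integral lborel (ereal 0) (ereal \<alpha>)
                 (\<lambda>u. f u * of_real (exp (- pi * u^2)))"

definition Theta_f :: "(real \<Rightarrow> complex) \<Rightarrow> real^'g \<Rightarrow> real^'g \<Rightarrow> complex^'g \<Rightarrow> complex^'g^'g \<Rightarrow> complex" where
  "Theta_f f c1 c2 z \<Omega> =
     infsum (\<lambda>n::int^'g.
       (let w = \<Omega> *v (\<chi> i. of_int (n $ i)) + z;
            E = (\<lambda>c. Ecal f ((\<Sum>i\<in>UNIV. c $ i * Im (w $ i)) / sqrt (- (1/2) * qform (ImMat \<Omega>) c)))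
        in (E c2 - E c1) *
           e ((1/2) * (\<Sum>i\<in>UNIV. \<Sum>j\<in>UNIV. of_int (n $ i) * \<Omega> $ i $ j * of_int (n $ j))
              + (\<Sum>i\<in>UNIV. of_int (n $ i) * z $ i)))) UNIV"

definition Theta_r :: "complex \<Rightarrow> real^'g \<Rightarrow> real^'g \<Rightarrow> complex^'g \<Rightarrow> complex^'g^'g \<Rightarrow> complex" where
  "Theta_r r c1 c2 z \<Omega> =
     of_real pi powr ((r + 1) / 2) / Gamma ((r + 1) / 2) *
     Theta_f (\<lambda>u. of_real \<bar>u\<bar> powr r) c1 c2 z \<Omega>"

end

theory Submission
  imports Defs
begin

lemma cpowr_pos: "x > 0 \<Longrightarrow> (complex_of_real x) powr z = exp (z * of_real (ln x))"
  by (simp add: powr_def Ln_of_real)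

lemma abs_int_cong: "(\<And>x. x \<in> S \<Longrightarrow> f x = g x) \<Longrightarrow> f absolutely_integrable_on S \<longleftrightarrow> g absolutely_integrable_on S"
  by (rule set_integrable_cong) auto

lemma complex_from_parts:
  fixes f :: "real \<Rightarrow> complex"
  assumes "(\<lambda>x. Re (f x)) absolutely_integrable_on S" "integral S (\<lambda>x. Re (f x)) = a"
     "(\<lambda>x. Im (f x)) absolutely_integrable_on S" "integral S (\<lambda>x. Im (f x)) = b"
  shows "f absolutely_integrable_on S \<and> integral S f = Complex a b"
proof -
  have e: "f = (\<lambda>x. of_real (Re (f x)) + \<i> * of_real (Im (f x)))"
    by (auto simp: complex_eq_iff)
  have 1: "(\<lambda>x. complex_of_real (Re (f x))) absolutely_integrable_on S"
    using absolutely_integrable_linear[OF assms(1) bounded_linear_of_real] by (simp add: o_def)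
  have 2: "(\<lambda>x. \<i> * complex_of_real (Im (f x))) absolutely_integrable_on S"
    using absolutely_integrable_linear[OF absolutely_integrable_linear[OF assms(3) bounded_linear_of_real] bounded_linear_mult_right[of \<i>]] by (simp add: o_def)
  have i1: "integral S (\<lambda>x. complex_of_real (Re (f x))) = of_real a"
    using integral_linear[OF set_lebesgue_integral_eq_integral(1)[OF assms(1)] bounded_linear_of_real] assms(2) by (simp add: o_def)
  have i2: "integral S (\<lambda>x. \<i> * complex_of_real (Im (f x))) = \<i> * of_real b"
    using integral_linear[OF set_lebesgue_integral_eq_integral(1)[OF absolutely_integrable_linear[OF assms(3) bounded_linear_of_real]] bounded_linear_mult_right[of \<i>]]
      integral_linear[OF set_lebesgue_integral_eq_integral(1)[OF assms(3)] bounded_linear_of_real] assms(4) by (simp add: o_def)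
  have "f absolutely_integrable_on S" by (subst e, rule set_integral_add(1)[OF 1 2])
  moreover have "integral S f = Complex a b"
    apply (subst e) apply (subst integral_add)
    using set_lebesgue_integral_eq_integral(1)[OF 1] set_lebesgue_integral_eq_integral(1)[OF 2] i1 i2
    by (auto simp: complex_eq_iff)
  ultimately show ?thesis by blast
qed

lemma GI:
  fixes r :: complex and c :: real
  assumes r: "Re r > -1" and c: "c > 0"
  shows "(\<lambda>u. of_real u powr r * of_real (exp (-c*u^2))) absolutely_integrable_on {0<..} \<and>
         integral {0<..} (\<lambda>u. of_real u powr r * of_real (exp (-c*u^2))) = Gamma ((r+1)/2) / (2 * of_real c powr ((r+1)/2))"
proof -
  define w where "w = (r+1)/2"
  have w: "Re w > 0" using r by (simp add: w_def)
  define F where "F t = complex_of_real t powr (w - 1) / of_real (exp t)" for t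
  have Fa: "F absolutely_integrable_on {0<..}" unfolding F_def by (rule absolutely_integrable_Gamma_integral'[OF w])
  have Fi: "integral {0<..} F = Gamma w" unfolding F_def by (rule integral_unique[OF Gamma_integral_complex'[OF w]])
  have gS: "(\<lambda>u. c * u^2) ` {0<..} = ({0<..} :: real set)"
  proof (auto)
    fix t :: real assume "t > 0"
    then show "t \<in> (\<lambda>u. c * u^2) ` {0<..}"
      using c by (intro image_eqI[of _ _ "sqrt (t/c)"]) (auto simp: real_sqrt_pow2)
  qed (use c in auto)
  have der: "\<And>x. x \<in> {0<..} \<Longrightarrow> ((\<lambda>u. c * u^2) has_field_derivative 2*c*x) (at x within {0<..})"
    by (auto intro!: derivative_eq_intros)
  have inj: "inj_on (\<lambda>u. c * u^2) ({0<..} :: real set)"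
    using c by (auto simp: inj_on_def power2_eq_square) (metis mult_cancel_left power2_eq_square power2_eq_iff_nonneg less_eq_real_def)
  have key: "2*c*u * F (c*u^2) = 2 * of_real c powr w * (of_real u powr r * of_real (exp (-c*u^2)))" if u: "u > 0" for u
  proof -
    have cu: "c*u^2 > 0" using u c by simp
    have "F (c*u^2) = exp ((w-1) * of_real (ln (c*u^2))) / of_real (exp (c*u^2))"
      unfolding F_def by (simp only: cpowr_pos[OF cu])
    also have "ln (c*u^2) = ln c + 2 * ln u" using u c by (simp add: ln_mult ln_realpow)
    finally have "F (c*u^2) = exp ((w-1) * (of_real (ln c) + 2 * of_real (ln u))) * of_real (exp (-c*u^2))"
      by (simp add: exp_minus divide_inverse)
    moreover have "complex_of_real (2*c*u) = 2 * exp (of_real (ln c) + of_real (ln u))"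
      using u c by (simp only: exp_add exp_of_real exp_ln of_real_mult of_real_numeral mult.assoc)
    ultimately have "2*c*u * F (c*u^2) = 2 * exp (of_real (ln c) + of_real (ln u)) * exp ((w-1) * (of_real (ln c) + 2 * of_real (ln u))) * of_real (exp (-c*u^2))"
      by (metis (no_types, lifting) mult.assoc of_real_mult of_real_numeral)
    also have "\<dots> = 2 * exp (w * of_real (ln c)) * exp (r * of_real (ln u)) * of_real (exp (-c*u^2))"
      by (simp add: w_def mult_exp_exp algebra_simps add_divide_distrib)
    finally show ?thesis using u c by (simp add: cpowr_pos)
  qed
  define k where "k = 2 * of_real c powr w"
  have k0: "k \<noteq> 0" using c by (simp add: k_def)
  define \<phi> where "\<phi> u = k * (of_real u powr r * of_real (exp (-c*u^2)))" for u :: real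
  have part: "(\<lambda>x. p (\<phi> x)) absolutely_integrable_on {0<..} \<and> integral {0<..} (\<lambda>x. p (\<phi> x)) = p (Gamma w)"
    if p: "bounded_linear p" and preal: "\<And>a z. p (complex_of_real a * z) = a * p z" for p :: "complex \<Rightarrow> real"
  proof -
    have a1: "(\<lambda>t. p (F t)) absolutely_integrable_on {0<..}"
      using absolutely_integrable_linear[OF Fa p] by (simp add: o_def)
    have i1: "integral {0<..} (\<lambda>t. p (F t)) = p (Gamma w)"
      using integral_linear[OF set_lebesgue_integral_eq_integral(1)[OF Fa] p] Fi by (simp add: o_def)
    have "(\<lambda>x. \<bar>2*c*x\<bar> * p (F (c*x^2))) absolutely_integrable_on {0<..} \<and>
          integral {0<..} (\<lambda>x. \<bar>2*c*x\<bar> * p (F (c*x^2))) = p (Gamma w)"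
      using has_absolute_integral_change_of_variables_1'[where f="\<lambda>t. p (F t)" and g="\<lambda>u. c*u^2" and g'="\<lambda>x. 2*c*x" and S="{0<..}" and b="p (Gamma w)", OF _ der inj]
        a1 i1 gS by simp
    moreover have "\<bar>2*c*x\<bar> * p (F (c*x^2)) = p (\<phi> x)" if "x \<in> {0<..}" for x
    proof -
      have "p (\<phi> x) = p (complex_of_real (2*c*x) * F (c*x^2))" using key[of x] that by (simp add: \<phi>_def k_def mult.assoc)
      also have "\<dots> = 2*c*x * p (F (c*x^2))" by (rule preal)
      finally show ?thesis using that c by simp
    qed
    ultimately show ?thesis
      by (metis (no_types, lifting) abs_int_cong integral_cong)
  qed
  have pre: "p (complex_of_real a * z) = a * p z" if "p = Re \<or> p = Im" for p a z using that by auto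
  have "\<phi> absolutely_integrable_on {0<..} \<and> integral {0<..} \<phi> = Complex (Re (Gamma w)) (Im (Gamma w))"
    apply (rule complex_from_parts)
    using part[OF bounded_linear_Re] part[OF bounded_linear_Im] by auto
  then have pa: "\<phi> absolutely_integrable_on {0<..}" and pi: "integral {0<..} \<phi> = Gamma w" by (auto simp: complex_eq_iff)
  have eq: "(\<lambda>u. of_real u powr r * of_real (exp (-c*u^2))) = (\<lambda>u. \<phi> u / k)"
    using k0 by (auto simp: \<phi>_def)
  show ?thesis
    unfolding eq
  proof
    show "(\<lambda>u. \<phi> u / k) absolutely_integrable_on {0<..}" using pa k0 by simp
    have "integral {0<..} (\<lambda>u. \<phi> u / k) = integral {0<..} \<phi> / k"
      using integral_linear[OF set_lebesgue_integral_eq_integral(1)[OF pa] bounded_linear_divide[of k]] by (simp add: o_def)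
    then show "integral {0<..} (\<lambda>u. \<phi> u / k) = Gamma ((r+1)/2) / (2 * of_real c powr ((r+1)/2))"
      using pi by (simp add: k_def w_def)
  qed
qed

lemma meas_pw: "(\<lambda>u::real. complex_of_real \<bar>u\<bar> powr r * of_real (exp (- pi * u^2))) \<in> borel_measurable borel"
proof -
  have e: "(\<lambda>u::real. complex_of_real \<bar>u\<bar> powr r * of_real (exp (- pi * u^2))) = 
     (\<lambda>u. if u = 0 then 0 else exp (r * of_real (ln \<bar>u\<bar>)) * of_real (exp (- pi * u^2)))"
    by (auto simp: fun_eq_iff cpowr_pos)
  show ?thesis unfolding e by measurable
qed

lemma Ecal_odd:
  assumes "\<And>u. f (-u) = f u"
  shows "Ecal f \<alpha> = - Ecal f (-\<alpha>)"
proof -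
  have "Ecal f \<alpha> = (LBINT x=-ereal \<alpha>..-ereal 0. f (-x) * of_real (exp (- pi * (-x)^2)))"
    unfolding Ecal_def by (rule interval_integral_reflect)
  also have "\<dots> = (LBINT x=ereal (-\<alpha>)..ereal 0. f x * of_real (exp (- pi * x^2)))"
    using assms by (simp add: zero_ereal_def)
  also have "\<dots> = - Ecal f (-\<alpha>)"
    unfolding Ecal_def by (rule interval_integral_endpoints_reverse)
  finally show ?thesis .
qed

lemma Ecal_pos:
  assumes r: "Re r > -1" and a: "\<alpha> \<ge> 0"
  shows "Ecal (\<lambda>u. of_real \<bar>u\<bar> powr r) \<alpha> = integral {0<..<\<alpha>} (\<lambda>u. of_real u powr r * of_real (exp (- pi * u^2)))"
proof -
  let ?F = "\<lambda>u::real. complex_of_real \<bar>u\<bar> powr r * of_real (exp (- pi * u^2))"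
  have g: "(\<lambda>u. of_real u powr r * of_real (exp (- pi * u^2))) absolutely_integrable_on {0<..}"
    using GI[OF r pi_gt_zero] by simp
  have g2: "(\<lambda>u. of_real u powr r * of_real (exp (- pi * u^2))) absolutely_integrable_on {0<..<\<alpha>}"
    by (rule set_integrable_subset[OF g]) auto
  have F2: "?F absolutely_integrable_on {0<..<\<alpha>}"
    using g2 by (subst abs_int_cong[where g="\<lambda>u. of_real u powr r * of_real (exp (- pi * u^2))"]) auto
  have Fb: "set_integrable lborel {0<..<\<alpha>} ?F"
    using F2 unfolding set_integrable_def
    by (subst (asm) integrable_completion) (use meas_pw in measurable)
  have "Ecal (\<lambda>u. of_real \<bar>u\<bar> powr r) \<alpha> = (LINT x:{0<..<\<alpha>}|lborel. ?F x)"
    unfolding Ecal_def interval_lebesgue_integral_def using a by simp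
  also have "\<dots> = integral {0<..<\<alpha>} ?F" by (rule set_borel_integral_eq_integral(2)[OF Fb])
  also have "\<dots> = integral {0<..<\<alpha>} (\<lambda>u. of_real u powr r * of_real (exp (- pi * u^2)))"
    by (rule integral_cong) auto
  finally show ?thesis .
qed

lemma abs_int_integrable: fixes f :: "'a::euclidean_space \<Rightarrow> 'b::euclidean_space" shows "f absolutely_integrable_on S \<Longrightarrow> f integrable_on S"
  by (rule set_lebesgue_integral_eq_integral(1))

lemma g4_int:
  fixes \<rho> c :: real assumes "\<rho> > -1" "c > 0"
  shows "(\<lambda>u. u powr \<rho> * exp (-c*u^2)) absolutely_integrable_on {0<..}"
proof -
  have "(\<lambda>u. complex_of_real u powr of_real \<rho> * of_real (exp (-c*u^2))) absolutely_integrable_on {0<..}"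
    using GI[of "of_real \<rho>" c] assms by simp
  from absolutely_integrable_linear[OF this bounded_linear_Re]
  have "(\<lambda>u. Re (complex_of_real u powr of_real \<rho> * of_real (exp (-c*u^2)))) absolutely_integrable_on {0<..}"
    by (simp add: o_def)
  then show ?thesis
    by (subst abs_int_cong[where g="\<lambda>u. Re (complex_of_real u powr of_real \<rho> * of_real (exp (-c*u^2)))"])
       (auto simp: powr_of_real)
qed

lemma tail:
  fixes r :: complex
  assumes r: "Re r > -1"
  shows "\<exists>C. \<forall>\<alpha>\<ge>0. norm (integral {0<..<\<alpha>} (\<lambda>u. of_real u powr r * of_real (exp (- pi * u^2)))
            - Gamma ((r+1)/2) / (2 * of_real pi powr ((r+1)/2))) \<le> C * exp (-(3/4)*pi*\<alpha>^2)"
proof -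
  define Gr where "Gr u = complex_of_real u powr r * of_real (exp (- pi * u^2))" for u :: real
  define g4 where "g4 u = u powr (Re r) * exp (-(pi/4)*u^2)" for u :: real
  have ga: "Gr absolutely_integrable_on {0<..}" and gi: "integral {0<..} Gr = Gamma ((r+1)/2) / (2 * of_real pi powr ((r+1)/2))"
    using GI[OF r pi_gt_zero] unfolding Gr_def[abs_def] by simp_all
  have g4a: "g4 absolutely_integrable_on {0<..}"
    unfolding g4_def by (rule g4_int) (use r in auto)
  define C where "C = integral {0<..} g4"
  show ?thesis
  proof (intro exI allI impI)
    fix \<alpha> :: real assume a: "\<alpha> \<ge> 0"
    define T where "T = {0<..} \<inter> {\<alpha>..}"
    have T: "T \<subseteq> {0<..}" by (auto simp: T_def)
    have un: "{0<..<\<alpha>} \<union> T = {0<..}" using a by (auto simp: T_def)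
    have Tl: "T \<in> sets lebesgue" by (auto simp: T_def)
    have GT: "Gr absolutely_integrable_on T" by (rule set_integrable_subset[OF ga Tl T])
    have G1: "Gr absolutely_integrable_on {0<..<\<alpha>}" by (rule set_integrable_subset[OF ga]) auto
    have g4T: "g4 absolutely_integrable_on T" by (rule set_integrable_subset[OF g4a Tl T])
    have "integral {0<..} Gr = integral {0<..<\<alpha>} Gr + integral T Gr"
      unfolding un[symmetric]
    proof (rule integral_Un)
      have "{0<..<\<alpha>} \<inter> T = {}" by (auto simp: T_def)
      then show "negligible ({0<..<\<alpha>} \<inter> T)" by simp
    qed (use abs_int_integrable[OF GT] abs_int_integrable[OF G1] in auto)
    then have "integral {0<..<\<alpha>} Gr - integral {0<..} Gr = - integral T Gr" by simp
    then have "norm (integral {0<..<\<alpha>} Gr - integral {0<..} Gr) = norm (integral T Gr)" by simp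
    also have "\<dots> \<le> integral T (\<lambda>u. exp (-(3/4)*pi*\<alpha>^2) * g4 u)"
    proof (rule integral_norm_bound_integral)
      show "Gr integrable_on T" by (rule abs_int_integrable[OF GT])
      show "(\<lambda>u. exp (-(3/4)*pi*\<alpha>^2) * g4 u) integrable_on T"
        using integrable_on_cmult_left[OF abs_int_integrable[OF g4T], of "exp (-(3/4)*pi*\<alpha>^2)"] by simp
      fix u assume u: "u \<in> T"
      then have u0: "u > 0" and ua: "u \<ge> \<alpha>" by (auto simp: T_def)
      have "norm (Gr u) = u powr Re r * exp (- pi * u^2)"
        using u0 by (simp add: Gr_def norm_mult norm_powr_real_powr)
      also have "exp (- pi * u^2) \<le> exp (-(3/4)*pi*\<alpha>^2) * exp (-(pi/4)*u^2)"
      proof -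
        have "\<alpha>^2 \<le> u^2" using a ua by (simp add: power_mono)
        then have "pi * \<alpha>^2 \<le> pi * u^2" using pi_gt_zero by (intro mult_left_mono) auto
        then have "- pi * u^2 \<le> -(3/4)*pi*\<alpha>^2 + -(pi/4)*u^2" by linarith
        then show ?thesis by (simp flip: exp_add)
      qed
      then have "u powr Re r * exp (- pi * u^2) \<le> u powr Re r * (exp (-(3/4)*pi*\<alpha>^2) * exp (-(pi/4)*u^2))"
        by (rule mult_left_mono) simp
      finally show "norm (Gr u) \<le> exp (-(3/4)*pi*\<alpha>^2) * g4 u" by (simp add: g4_def mult_ac)
    qed
    also have "\<dots> = exp (-(3/4)*pi*\<alpha>^2) * integral T g4" by simp
    also have "\<dots> \<le> exp (-(3/4)*pi*\<alpha>^2) * C"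
      unfolding C_def
      by (intro mult_left_mono integral_subset_le[OF T] abs_int_integrable[OF g4T] abs_int_integrable[OF g4a])
         (auto simp: g4_def)
    finally show "norm (integral {0<..<\<alpha>} (\<lambda>u. of_real u powr r * of_real (exp (- pi * u^2)))
            - Gamma ((r+1)/2) / (2 * of_real pi powr ((r+1)/2))) \<le> C * exp (-(3/4)*pi*\<alpha>^2)"
      using gi unfolding Gr_def[abs_def] by (simp add: mult.commute)
  qed
qed

definition Kr :: "complex \<Rightarrow> complex" where
  "Kr r = of_real pi powr ((r + 1) / 2) / Gamma ((r + 1) / 2)"

lemma half_bound:
  assumes r: "Re r > -1"
  shows "\<exists>C. \<forall>\<alpha>\<ge>0. norm (Kr r * Ecal (\<lambda>u. of_real \<bar>u\<bar> powr r) \<alpha> - 1/2) \<le> C * exp (-(3/4)*pi*\<alpha>^2)"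
proof -
  define w where "w = (r+1)/2"
  have w: "Re w > 0" using r by (simp add: w_def)
  have gnz: "Gamma w \<noteq> 0"
  proof (rule Gamma_nonzero)
    show "w \<notin> \<int>\<^sub>\<le>\<^sub>0" using w by (auto elim!: nonpos_Ints_cases)
  qed
  have pnz: "complex_of_real pi powr w \<noteq> 0" by simp
  have KI: "Kr r * (Gamma w / (2 * of_real pi powr w)) = 1/2"
  proof -
    have "Kr r = of_real pi powr w / Gamma w" by (simp add: Kr_def w_def)
    then show ?thesis using gnz pnz by (simp add: field_simps)
  qed
  obtain C where C: "\<And>\<alpha>. \<alpha> \<ge> 0 \<Longrightarrow> norm (integral {0<..<\<alpha>} (\<lambda>u. of_real u powr r * of_real (exp (- pi * u^2)))
            - Gamma w / (2 * of_real pi powr w)) \<le> C * exp (-(3/4)*pi*\<alpha>^2)"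
    using tail[OF r] unfolding w_def by blast
  show ?thesis
  proof (intro exI allI impI)
    fix \<alpha> :: real assume a: "\<alpha> \<ge> 0"
    have "Kr r * Ecal (\<lambda>u. of_real \<bar>u\<bar> powr r) \<alpha> - 1/2 =
       Kr r * (integral {0<..<\<alpha>} (\<lambda>u. of_real u powr r * of_real (exp (- pi * u^2))) - Gamma w / (2 * of_real pi powr w))"
      using KI by (simp add: Ecal_pos[OF r a] right_diff_distrib)
    then have "norm (Kr r * Ecal (\<lambda>u. of_real \<bar>u\<bar> powr r) \<alpha> - 1/2) \<le> norm (Kr r) * (C * exp (-(3/4)*pi*\<alpha>^2))"
      using C[OF a] by (simp add: norm_mult mult_left_mono)
    then show "norm (Kr r * Ecal (\<lambda>u. of_real \<bar>u\<bar> powr r) \<alpha> - 1/2) \<le> (norm (Kr r) * C) * exp (-(3/4)*pi*\<alpha>^2)"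
      by (simp add: mult.assoc)
  qed
qed

definition GG :: "complex \<Rightarrow> complex \<Rightarrow> real \<Rightarrow> complex" where
  "GG r s \<alpha> = Kr r * Ecal (\<lambda>u. of_real \<bar>u\<bar> powr r) \<alpha> - Kr s * Ecal (\<lambda>u. of_real \<bar>u\<bar> powr s) \<alpha>"

lemma GG_odd: "GG r s \<alpha> = - GG r s (-\<alpha>)"
  unfolding GG_def
  by (subst (1 2) Ecal_odd[where \<alpha>=\<alpha>]) (auto simp: algebra_simps)

lemma GG_bound:
  assumes r: "Re r > -1" and s: "Re s > -1"
  shows "\<exists>C. \<forall>\<alpha>. norm (GG r s \<alpha>) \<le> C * exp (-(3/4)*pi*\<alpha>^2)"
proof -
  obtain C1 where C1: "\<And>\<alpha>. \<alpha> \<ge> 0 \<Longrightarrow> norm (Kr r * Ecal (\<lambda>u. of_real \<bar>u\<bar> powr r) \<alpha> - 1/2) \<le> C1 * exp (-(3/4)*pi*\<alpha>^2)"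
    using half_bound[OF r] by blast
  obtain C2 where C2: "\<And>\<alpha>. \<alpha> \<ge> 0 \<Longrightarrow> norm (Kr s * Ecal (\<lambda>u. of_real \<bar>u\<bar> powr s) \<alpha> - 1/2) \<le> C2 * exp (-(3/4)*pi*\<alpha>^2)"
    using half_bound[OF s] by blast
  have pos: "norm (GG r s \<alpha>) \<le> (C1 + C2) * exp (-(3/4)*pi*\<alpha>^2)" if a: "\<alpha> \<ge> 0" for \<alpha>
  proof -
    have "GG r s \<alpha> = (Kr r * Ecal (\<lambda>u. of_real \<bar>u\<bar> powr r) \<alpha> - 1/2) - (Kr s * Ecal (\<lambda>u. of_real \<bar>u\<bar> powr s) \<alpha> - 1/2)"
      by (simp add: GG_def)
    then have "norm (GG r s \<alpha>) \<le> norm (Kr r * Ecal (\<lambda>u. of_real \<bar>u\<bar> powr r) \<alpha> - 1/2) + norm (Kr s * Ecal (\<lambda>u. of_real \<bar>u\<bar> powr s) \<alpha> - 1/2)"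
      by (metis norm_triangle_ineq4)
    also have "\<dots> \<le> (C1 + C2) * exp (-(3/4)*pi*\<alpha>^2)"
      using C1[OF a] C2[OF a] by (simp add: distrib_right)
    finally show ?thesis .
  qed
  show ?thesis
  proof (intro exI allI)
    fix \<alpha> :: real
    show "norm (GG r s \<alpha>) \<le> (C1 + C2) * exp (-(3/4)*pi*\<alpha>^2)"
    proof (cases "\<alpha> \<ge> 0")
      case True then show ?thesis by (rule pos)
    next
      case False
      then have "norm (GG r s (-\<alpha>)) \<le> (C1 + C2) * exp (-(3/4)*pi*(-\<alpha>)^2)" by (intro pos) auto
      then show ?thesis by (subst GG_odd) simp
    qed
  qed
qed

lemma qform_eq: "qform M c = c \<bullet> (M *v c)"
  unfolding qform_def inner_vec_def matrix_vector_mult_def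
  by (simp add: sum_distrib_left mult_ac)

lemma sym_bil: "transpose M = M \<Longrightarrow> (a::real^'n) \<bullet> (M *v b) = b \<bullet> (M *v a)"
proof -
  assume t: "transpose M = M"
  have "a \<bullet> (M *v b) = (a v* M) \<bullet> b" by (simp add: dot_lmul_matrix)
  also have "\<dots> = (transpose M *v a) \<bullet> b" by simp
  also have "\<dots> = b \<bullet> (M *v a)" using t by (simp add: inner_commute)
  finally show ?thesis .
qed

lemma diag_lemma:
  fixes d w y :: "real^'g"
  assumes cp: "card {i. d$i > 0} = CARD('g) - 1" and cn: "card {i. d$i < 0} = 1"
    and W: "(\<Sum>i\<in>UNIV. d$i * (w$i)^2) < 0"
    and X: "(\<Sum>i\<in>UNIV. d$i * w$i * y$i) = 0"
    and y: "y \<noteq> 0"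
  shows "(\<Sum>i\<in>UNIV. d$i * (y$i)^2) > 0"
proof -
  obtain i0 where i0: "{i. d$i < 0} = {i0}" using cn by (rule card_1_singletonE)
  have un: "{i. d$i > 0} \<union> {i. d$i < 0} = UNIV"
  proof (rule card_subset_eq)
    have "card ({i. d$i > 0} \<union> {i. d$i < 0}) = card {i. d$i > 0} + card {i. d$i < 0}"
      by (rule card_Un_disjoint) auto
    also have "\<dots> = CARD('g)" using cp cn by (simp add: Suc_leI)
    finally show "card ({i. d$i > 0} \<union> {i. d$i < 0}) = card (UNIV :: 'g set)" by simp
  qed auto
  have dpos: "d$i > 0" if "i \<noteq> i0" for i
    using un i0 that by (metis (mono_tags, lifting) UNIV_I UnE mem_Collect_eq singletonD)
  have dneg: "d$i0 < 0" using i0 by auto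
  define S where "S = UNIV - {i0}"
  define e where "e = - d$i0"
  have e: "e > 0" using dneg by (simp add: e_def)
  have split: "(\<Sum>i\<in>UNIV. f i) = f i0 + (\<Sum>i\<in>S. f i)" for f :: "'g \<Rightarrow> real"
    unfolding S_def by (simp add: sum.remove)
  define Wp where "Wp = (\<Sum>i\<in>S. d$i * (w$i)^2)"
  define Yp where "Yp = (\<Sum>i\<in>S. d$i * (y$i)^2)"
  define Xp where "Xp = (\<Sum>i\<in>S. d$i * w$i * y$i)"
  have Wp0: "Wp \<ge> 0" unfolding Wp_def by (rule sum_nonneg, rule mult_nonneg_nonneg) (use dpos in \<open>auto simp: S_def less_imp_le\<close>)
  have Yp0: "Yp \<ge> 0" unfolding Yp_def by (rule sum_nonneg, rule mult_nonneg_nonneg) (use dpos in \<open>auto simp: S_def less_imp_le\<close>)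
  have CS: "Xp^2 \<le> Wp * Yp"
  proof -
    have "(\<Sum>i\<in>S. (sqrt (d$i) * w$i) * (sqrt (d$i) * y$i))^2 \<le> (\<Sum>i\<in>S. (sqrt (d$i) * w$i)^2) * (\<Sum>i\<in>S. (sqrt (d$i) * y$i)^2)"
      by (rule Cauchy_Schwarz_ineq_sum)
    moreover have "(\<Sum>i\<in>S. (sqrt (d$i) * w$i) * (sqrt (d$i) * y$i)) = Xp"
      unfolding Xp_def using dpos by (intro sum.cong) (auto simp: S_def less_imp_le)
    moreover have "(\<Sum>i\<in>S. (sqrt (d$i) * w$i)^2) = Wp"
      unfolding Wp_def using dpos by (intro sum.cong) (auto simp: S_def power_mult_distrib less_imp_le)
    moreover have "(\<Sum>i\<in>S. (sqrt (d$i) * y$i)^2) = Yp"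
      unfolding Yp_def using dpos by (intro sum.cong) (auto simp: S_def power_mult_distrib less_imp_le)
    ultimately show ?thesis by simp
  qed
  have W': "Wp < e * (w$i0)^2" using W unfolding split[of "\<lambda>i. d$i * (w$i)^2"] Wp_def e_def by simp
  have X': "Xp = e * w$i0 * y$i0" using X unfolding split[of "\<lambda>i. d$i * w$i * y$i"] Xp_def e_def by simp
  have goal: "(\<Sum>i\<in>UNIV. d$i * (y$i)^2) = Yp - e * (y$i0)^2"
    unfolding split[of "\<lambda>i. d$i * (y$i)^2"] Yp_def e_def by simp
  show ?thesis
  proof (cases "y$i0 = 0")
    case True
    obtain j where j: "y$j \<noteq> 0" using y by (metis vec_eq_iff zero_index)
    have ji: "j \<noteq> i0" using j True by auto
    have dnn: "0 \<le> d$i * (y$i)^2" if "i \<noteq> i0" for i using dpos[OF that] by simp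
    have dj: "0 < d$j * (y$j)^2" using dpos[OF ji] j by simp
    have "Yp > 0" unfolding Yp_def
      by (rule sum_pos2[of S j]) (use ji dj dnn in \<open>auto simp: S_def\<close>)
    then show ?thesis using goal True by simp
  next
    case False
    show ?thesis
    proof (rule ccontr)
      assume "\<not> ?thesis"
      then have Yle: "Yp \<le> e * (y$i0)^2" using goal by simp
      have y2: "(y$i0)^2 > 0" using False by simp
      have "Xp^2 \<le> Wp * (e * (y$i0)^2)" using CS Yle Wp0 by (meson mult_left_mono order_trans)
      also have "\<dots> < (e * (w$i0)^2) * (e * (y$i0)^2)"
        using W' e y2 by (intro mult_strict_right_mono) auto
      also have "\<dots> = Xp^2" using X' by (simp add: power_mult_distrib power2_eq_square)
      finally show False by simp
    qed
  qed
qed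

lemma diag_form:
  fixes d x y :: "real^'g"
  shows "x \<bullet> ((\<chi> i j. if i = j then d $ i else 0) *v y) = (\<Sum>i\<in>UNIV. d$i * x$i * y$i)"
proof -
  have "(\<Sum>j\<in>UNIV. (if i = j then d$i else 0) * y$j) = d$i * y$i" for i
  proof -
    have "(\<Sum>j\<in>UNIV. (if i = j then d$i else 0) * y$j) = (\<Sum>j\<in>UNIV. if i = j then d$i * y$j else 0)"
      by (rule sum.cong) auto
    also have "\<dots> = d$i * y$i" by simp
    finally show ?thesis .
  qed
  then show ?thesis unfolding inner_vec_def matrix_vector_mult_def by (simp add: mult_ac)
qed

lemma sig_pos:
  fixes M :: "real^'g^'g"
  assumes sig: "has_signature M (CARD('g) - 1) 1"
    and c: "c \<bullet> (M *v c) < 0" and cv: "c \<bullet> (M *v v) = 0" and v: "v \<noteq> 0"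
  shows "v \<bullet> (M *v v) > 0"
proof -
  obtain Q d where Q: "orthogonal_matrix Q" and QMQ: "transpose Q ** M ** Q = (\<chi> i j. if i = j then d $ i else 0)"
     and cp: "card {i. d $ i > 0} = CARD('g) - 1" and cn: "card {i. d $ i < 0} = 1"
    using sig unfolding has_signature_def by blast
  define D where "D = (\<chi> i j. if i = j then d $ i else (0::real))"
  have QQ: "transpose Q ** Q = mat 1" "Q ** transpose Q = mat 1" using Q unfolding orthogonal_matrix_def by auto
  have MD: "M = Q ** D ** transpose Q"
  proof -
    have "Q ** D ** transpose Q = Q ** (transpose Q ** M ** Q) ** transpose Q"
      using QMQ unfolding D_def by simp
    also have "\<dots> = (Q ** transpose Q) ** M ** (Q ** transpose Q)" by (simp add: matrix_mul_assoc)
    finally show ?thesis using QQ by simp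
  qed
  have bil: "a \<bullet> (M *v b) = (\<Sum>i\<in>UNIV. d$i * (transpose Q *v a)$i * (transpose Q *v b)$i)" for a b
  proof -
    have "M *v b = Q *v (D *v (transpose Q *v b))"
      unfolding MD by (simp only: matrix_vector_mul_assoc matrix_mul_assoc)
    then have "a \<bullet> (M *v b) = a \<bullet> (Q *v (D *v (transpose Q *v b)))" by simp
    also have "\<dots> = (a v* Q) \<bullet> (D *v (transpose Q *v b))" by (simp only: dot_lmul_matrix)
    also have "\<dots> = (transpose Q *v a) \<bullet> (D *v (transpose Q *v b))" by (simp only: transpose_matrix_vector)
    finally show ?thesis unfolding D_def diag_form .
  qed
  have yv: "transpose Q *v v \<noteq> 0"
  proof
    assume a: "transpose Q *v v = 0"
    have "Q *v (transpose Q *v v) = v" by (simp only: matrix_vector_mul_assoc QQ(2) matrix_vector_mul_lid)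
    then show False using v a by simp
  qed
  have "(\<Sum>i\<in>UNIV. d$i * ((transpose Q *v v)$i)^2) > 0"
  proof (rule diag_lemma[OF cp cn _ _ yv, where w="transpose Q *v c"])
    show "(\<Sum>i\<in>UNIV. d$i * ((transpose Q *v c)$i)^2) < 0" using c bil[of c c] by (simp add: power2_eq_square mult_ac)
    show "(\<Sum>i\<in>UNIV. d$i * (transpose Q *v c)$i * (transpose Q *v v)$i) = 0" using cv bil[of c v] by simp
  qed
  then show ?thesis using bil[of v v] by (simp add: power2_eq_square mult_ac)
qed

lemma pd:
  fixes M :: "real^'g^'g" and c :: "real^'g"
  assumes sig: "has_signature M (CARD('g) - 1) 1" and q: "c \<bullet> (M *v c) < 0"
  shows "\<exists>\<mu>>0. \<forall>x. x \<bullet> (M *v x) + (5/4) * (c \<bullet> (M *v x))^2 / (- (c \<bullet> (M *v c))) \<ge> \<mu> * (norm x)^2"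
proof -
  have sym: "transpose M = M" using sig by (simp add: has_signature_def)
  define qq where "qq = c \<bullet> (M *v c)"
  have qq: "qq < 0" using q by (simp add: qq_def)
  define F where "F x = x \<bullet> (M *v x) + (5/4) * (c \<bullet> (M *v x))^2 / (- qq)" for x
  have pos: "F x > 0" if x: "x \<noteq> 0" for x
  proof -
    define B where "B = c \<bullet> (M *v x)"
    define t where "t = B / qq"
    define xp where "xp = x - t *\<^sub>R c"
    have xc: "x \<bullet> (M *v c) = B" unfolding B_def by (rule sym_bil[OF sym])
    have cxp: "c \<bullet> (M *v xp) = 0"
      using qq by (simp add: xp_def B_def[symmetric] qq_def[symmetric] matrix_vector_mult_diff_distrib matrix_vector_mult_scaleR inner_diff_right t_def)
    have Qx: "x \<bullet> (M *v x) = xp \<bullet> (M *v xp) + B^2/qq"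
    proof -
      have "xp \<bullet> (M *v xp) = x \<bullet> (M *v x) - t * (x \<bullet> (M *v c)) - t * (c \<bullet> (M *v x)) + t*t*qq"
        by (simp add: xp_def qq_def matrix_vector_mult_diff_distrib matrix_vector_mult_scaleR inner_diff_right inner_diff_left algebra_simps)
      also have "\<dots> = x \<bullet> (M *v x) - B^2/qq"
        using qq by (simp add: xc B_def[symmetric] t_def power2_eq_square field_simps)
      finally show ?thesis by simp
    qed
    have Fx: "F x = xp \<bullet> (M *v xp) + (1/4) * B^2 / (- qq)"
      unfolding F_def Qx B_def[symmetric] using qq by (simp add: field_simps)
    show ?thesis
    proof (cases "xp = 0")
      case True
      then have xt: "x = t *\<^sub>R c" by (simp add: xp_def)
      then have "t \<noteq> 0" using x by auto
      moreover have "B = t * qq" using xt by (simp add: B_def qq_def matrix_vector_mult_scaleR)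
      ultimately have "B \<noteq> 0" using qq by simp
      then have b2: "B^2 > 0" by simp
      have e1: "(1/4) * B^2 / (- qq) = B^2 / (4 * (-qq))" by simp
      have "B^2 / (4 * (-qq)) > 0" using b2 qq by (intro divide_pos_pos) auto
      then have "(1/4) * B^2 / (- qq) > 0" by (subst e1)
      then show ?thesis using Fx True by simp
    next
      case False
      have "xp \<bullet> (M *v xp) > 0" by (rule sig_pos[OF sig q cxp False])
      moreover have "(1/4) * B^2 / (- qq) \<ge> 0" using qq by (intro divide_nonneg_pos) auto
      ultimately show ?thesis using Fx by simp
    qed
  qed
  have hom: "F (a *\<^sub>R x) = a^2 * F x" for a x
    by (simp add: F_def matrix_vector_mult_scaleR power2_eq_square field_simps)
  have cont: "continuous_on (sphere 0 1) F"
  proof -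
    have l: "continuous_on (sphere 0 1) (\<lambda>x. M *v x)"
      by (rule linear_continuous_on) simp
    show ?thesis unfolding F_def using qq by (intro continuous_intros l) auto
  qed
  obtain v :: "real^'g" where v: "norm v = 1" using vector_choose_size[of 1] by auto
  have ne: "sphere (0::real^'g) 1 \<noteq> {}" using v by auto
  obtain x0 where x0: "x0 \<in> sphere 0 1" and min: "\<And>y. y \<in> sphere 0 1 \<Longrightarrow> F x0 \<le> F y"
    using continuous_attains_inf[OF compact_sphere ne cont] by blast
  have mu: "F x0 > 0" using x0 by (intro pos) auto
  show ?thesis
  proof (intro exI[of _ "F x0"] conjI allI mu)
    fix x :: "real^'g"
    show "F x0 * (norm x)^2 \<le> x \<bullet> (M *v x) + (5/4) * (c \<bullet> (M *v x))^2 / (- (c \<bullet> (M *v c)))"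
    proof (cases "x = 0")
      case True then show ?thesis by simp
    next
      case False
      define u where "u = (1 / norm x) *\<^sub>R x"
      have u: "u \<in> sphere 0 1" using False by (simp add: u_def)
      have xu: "x = norm x *\<^sub>R u" using False by (simp add: u_def)
      have "F x = (norm x)^2 * F u" by (subst xu, rule hom)
      moreover have "F x0 \<le> F u" by (rule min[OF u])
      ultimately have "F x0 * (norm x)^2 \<le> F x" by (metis mult.commute mult_right_mono zero_le_power2)
      then show ?thesis by (simp add: F_def qq_def)
    qed
  qed
qed

lemma gauss1_nat: fixes l :: real assumes l: "l > 0"
  shows "(\<lambda>n::nat. exp (- l * (real n)^2)) summable_on UNIV"
proof -
  have "summable (\<lambda>n::nat. exp (- l * (real n)^2))"
  proof (rule summable_comparison_test[OF _ summable_geometric[of "exp (-l)"]])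
    show "\<exists>N. \<forall>n\<ge>N. norm (exp (- l * (real n)^2)) \<le> exp (- l) ^ n"
    proof (intro exI allI impI)
      fix n :: nat
      have "real n \<le> (real n)^2" by (cases n) (auto simp: power2_eq_square)
      then have "- l * (real n)^2 \<le> - l * real n" using l by (intro mult_left_mono_neg) auto
      then show "norm (exp (- l * (real n)^2)) \<le> exp (- l) ^ n"
        by (simp add: exp_of_nat_mult[symmetric] mult.commute)
    qed
    show "norm (exp (-l)) < 1" using l by simp
  qed
  then show ?thesis by (subst summable_on_UNIV_nonneg_real_iff) auto
qed

lemma gauss1_int: fixes l :: real assumes l: "l > 0"
  shows "(\<lambda>k::int. exp (- l * (real_of_int k)^2)) summable_on UNIV"
proof -
  let ?f = "\<lambda>k::int. exp (- l * (real_of_int k)^2)"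
  have A: "?f summable_on (range int)"
    using gauss1_nat[OF l] by (subst summable_on_reindex) (auto simp: o_def)
  have B: "?f summable_on (range (\<lambda>n. - int n))"
    using gauss1_nat[OF l] by (subst summable_on_reindex) (auto simp: o_def inj_def)
  have "UNIV = range int \<union> range (\<lambda>n. - int n)"
    by (auto simp: image_def) (metis add.inverse_inverse nonneg_int_cases int_cases)
  then show ?thesis using summable_on_union[OF A B] by simp
qed

lemma lattice_summable:
  fixes l :: real assumes l: "l > 0"
  shows "(\<lambda>n::int^'g. exp (- l * (\<Sum>i\<in>UNIV. (real_of_int (n$i))^2))) summable_on UNIV"
proof -
  let ?f = "\<lambda>(i::'g) (k::int). exp (- l * (real_of_int k)^2)"
  have f1: "Infinite_Set_Sum.abs_summable_on (?f i) UNIV" for i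
    using gauss1_int[OF l] by (subst abs_summable_equivalent[symmetric]) simp
  have "Infinite_Set_Sum.abs_summable_on (\<lambda>g. \<Prod>i\<in>UNIV. ?f i (g i)) (PiE UNIV (\<lambda>_. UNIV))"
    by (rule abs_summable_on_prod_PiE) (use f1 in auto)
  then have "(\<lambda>g. \<Prod>i\<in>UNIV. ?f i (g i)) summable_on (PiE UNIV (\<lambda>_. UNIV))"
    by (subst (asm) abs_summable_equivalent[symmetric]) (simp add: prod_nonneg)
  moreover have "PiE UNIV (\<lambda>_. UNIV) = (UNIV :: ('g \<Rightarrow> int) set)" by (simp add: PiE_UNIV_domain)
  ultimately have S: "(\<lambda>g. \<Prod>i\<in>UNIV. ?f i (g i)) summable_on UNIV" by simp
  have bij: "bij_betw vec_nth (UNIV :: (int^'g) set) UNIV"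
    by (auto simp: bij_betw_def inj_def vec_eq_iff image_def intro!: exI[of _ "vec_lambda _"])
  have "(\<lambda>n::int^'g. \<Prod>i\<in>UNIV. ?f i (n$i)) summable_on UNIV"
    using summable_on_reindex_bij_betw[OF bij, of "\<lambda>g. \<Prod>i\<in>UNIV. ?f i (g i)"] S by simp
  then show ?thesis by (simp add: exp_sum sum_distrib_left)
qed

definition nr :: "int^'g \<Rightarrow> real^'g" where "nr n = (\<chi> i. real_of_int (n$i))"
definition yv :: "complex^'g \<Rightarrow> real^'g" where "yv z = (\<chi> i. Im (z$i))"

definition al :: "complex^'g^'g \<Rightarrow> complex^'g \<Rightarrow> real^'g \<Rightarrow> int^'g \<Rightarrow> real" where
  "al \<Omega> z c n = (\<Sum>i\<in>UNIV. c $ i * Im ((\<Omega> *v (\<chi> i. of_int (n $ i)) + z) $ i)) / sqrt (- (1/2) * qform (ImMat \<Omega>) c)"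

definition ph :: "complex^'g^'g \<Rightarrow> complex^'g \<Rightarrow> int^'g \<Rightarrow> complex" where
  "ph \<Omega> z n = (1/2) * (\<Sum>i\<in>UNIV. \<Sum>j\<in>UNIV. of_int (n $ i) * \<Omega> $ i $ j * of_int (n $ j)) + (\<Sum>i\<in>UNIV. of_int (n $ i) * z $ i)"

lemma Im_lin: "(\<Sum>i\<in>UNIV. c $ i * Im ((\<Omega> *v (\<chi> i. of_int (n $ i)) + z) $ i)) = c \<bullet> (ImMat \<Omega> *v nr n) + c \<bullet> yv z"
  by (simp add: matrix_vector_mult_def inner_vec_def ImMat_def nr_def yv_def Im_sum sum_distrib_left distrib_left sum.distrib mult_ac)

lemma Im_ph: "Im (ph \<Omega> z n) = (1/2) * (nr n \<bullet> (ImMat \<Omega> *v nr n)) + nr n \<bullet> yv z"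
  by (simp add: ph_def matrix_vector_mult_def inner_vec_def ImMat_def nr_def yv_def Im_sum sum_distrib_left mult_ac)

lemma norm_e: "norm (e x) = exp (- 2 * pi * Im x)"
  by (simp add: e_def norm_exp_eq_Re)

lemma norm_nr: "(norm (nr n))^2 = (\<Sum>i\<in>UNIV. (real_of_int (n$i))^2)"
proof -
  have "(norm (nr n))^2 = nr n \<bullet> nr n" by (rule power2_norm_eq_inner)
  then show ?thesis by (simp add: inner_vec_def nr_def power2_eq_square)
qed

lemma summ_gen:
  fixes \<Omega> :: "complex^'g^'g" and z :: "complex^'g" and c :: "real^'g" and G :: "real \<Rightarrow> complex"
  assumes sig: "has_signature (ImMat \<Omega>) (CARD('g) - 1) 1" and q: "qform (ImMat \<Omega>) c < 0"
    and G: "\<And>\<alpha>. norm (G \<alpha>) \<le> C * exp (-(3/4)*pi*\<alpha>^2)"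
  shows "(\<lambda>n::int^'g. G (al \<Omega> z c n) * e (ph \<Omega> z n)) summable_on UNIV"
proof -
  define M where "M = ImMat \<Omega>"
  define y where "y = yv z"
  define qq where "qq = c \<bullet> (M *v c)"
  have qq: "qq < 0" using q by (simp add: qq_def M_def qform_eq)
  define \<beta> where "\<beta> = c \<bullet> y"
  obtain \<mu> where mu: "\<mu> > 0" and pdb: "\<And>x. x \<bullet> (M *v x) + (5/4) * (c \<bullet> (M *v x))^2 / (- qq) \<ge> \<mu> * (norm x)^2"
    using pd[OF sig, of c] q unfolding M_def qq_def qform_eq by blast
  have C0: "C \<ge> 0"
  proof -
    have "norm (G 0) \<le> C" using G[of 0] by simp
    then show ?thesis using norm_ge_zero order_trans by blast
  qed
  define K where "K = (15/2) * \<beta>^2 / (- qq) + 2 * (norm y)^2 / \<mu>"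
  have key: "(3/4) * (al \<Omega> z c n)^2 + 2 * Im (ph \<Omega> z n) \<ge> (\<mu>/2) * (norm (nr n))^2 - K" for n
  proof -
    define x where "x = nr n"
    define B where "B = c \<bullet> (M *v x)"
    have al: "al \<Omega> z c n = (B + \<beta>) / sqrt (- (1/2) * qq)"
      unfolding al_def Im_lin by (simp add: B_def x_def \<beta>_def y_def M_def qq_def qform_eq)
    have al2: "(al \<Omega> z c n)^2 = 2 * (B + \<beta>)^2 / (- qq)"
      unfolding al using qq by (simp add: power_divide real_sqrt_pow2)
    have ph2: "2 * Im (ph \<Omega> z n) = x \<bullet> (M *v x) + 2 * (x \<bullet> y)"
      unfolding Im_ph by (simp add: x_def M_def y_def)
    have sq: "(B + \<beta>)^2 \<ge> (5/6) * B^2 - 5 * \<beta>^2"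
    proof -
      have "(B + \<beta>)^2 - ((5/6) * B^2 - 5 * \<beta>^2) = (B / sqrt 6 + sqrt 6 * \<beta>)^2"
        by (simp add: power2_eq_square field_simps)
      then show ?thesis by (smt (verit) zero_le_power2)
    qed
    have t1: "(3/4) * (al \<Omega> z c n)^2 \<ge> (5/4) * B^2 / (- qq) - (15/2) * \<beta>^2 / (- qq)"
    proof -
      have "(3/4) * (al \<Omega> z c n)^2 = (3/2) * (B + \<beta>)^2 / (- qq)" unfolding al2 by simp
      also have "\<dots> \<ge> (3/2) * ((5/6) * B^2 - 5 * \<beta>^2) / (- qq)"
        using sq qq by (intro divide_right_mono mult_left_mono) auto
      finally show ?thesis using qq by (simp add: field_simps)
    qed
    have t2: "2 * (x \<bullet> y) \<ge> - (\<mu>/2) * (norm x)^2 - 2 * (norm y)^2 / \<mu>"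
    proof -
      have "\<bar>x \<bullet> y\<bar> \<le> norm x * norm y" by (rule Cauchy_Schwarz_ineq2)
      moreover have "2 * (norm x * norm y) \<le> (\<mu>/2) * (norm x)^2 + 2 * (norm y)^2 / \<mu>"
      proof -
        have "0 \<le> (sqrt (\<mu>/2) * norm x - sqrt (2/\<mu>) * norm y)^2" by simp
        also have "\<dots> = (\<mu>/2) * (norm x)^2 + (2/\<mu>) * (norm y)^2 - 2 * (sqrt (\<mu>/2) * sqrt (2/\<mu>)) * (norm x * norm y)"
          using mu by (simp add: power2_eq_square algebra_simps)
        also have "sqrt (\<mu>/2) * sqrt (2/\<mu>) = 1" using mu by (simp add: real_sqrt_mult[symmetric])
        finally show ?thesis by simp
      qed
      ultimately show ?thesis by linarith
    qed
    have "(3/4) * (al \<Omega> z c n)^2 + 2 * Im (ph \<Omega> z n) \<ge> \<mu> * (norm x)^2 - (15/2) * \<beta>^2 / (- qq) - (\<mu>/2) * (norm x)^2 - 2 * (norm y)^2 / \<mu>"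
      using t1 t2 pdb[of x] unfolding ph2 B_def by linarith
    then show ?thesis by (simp add: K_def x_def algebra_simps)
  qed
  define g where "g n = (C * exp (pi * K)) * exp (- (pi * \<mu> / 2) * (\<Sum>i\<in>UNIV. (real_of_int (n$i))^2))" for n :: "int^'g"
  have gs: "g summable_on UNIV"
    unfolding g_def by (intro summable_on_cmult_right lattice_summable) (use mu in simp)
  have bd: "norm (G (al \<Omega> z c n) * e (ph \<Omega> z n)) \<le> g n" for n
  proof -
    have "norm (G (al \<Omega> z c n) * e (ph \<Omega> z n)) \<le> C * exp (-(3/4)*pi*(al \<Omega> z c n)^2) * exp (- 2 * pi * Im (ph \<Omega> z n))"
      unfolding norm_mult norm_e by (intro mult_right_mono G) auto
    also have "\<dots> = C * exp (- pi * ((3/4) * (al \<Omega> z c n)^2 + 2 * Im (ph \<Omega> z n)))"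
      by (simp add: mult.assoc exp_add[symmetric] algebra_simps)
    also have "\<dots> \<le> C * exp (- pi * ((\<mu>/2) * (norm (nr n))^2 - K))"
      using key[of n] C0 by (intro mult_left_mono) auto
    also have "\<dots> = g n"
      by (simp add: g_def norm_nr exp_add[symmetric] algebra_simps)
    finally show ?thesis .
  qed
  show ?thesis
    by (rule abs_summable_summable, rule Infinite_Sum.abs_summable_on_comparison_test'[OF gs]) (use bd in auto)
qed

lemma Im_ofint_mult: "Im (of_int a * w) = of_int a * Im w"
  by simp

lemma ImMat_conj:
  "ImMat (transpose (int_to_cmat P) ** \<Omega> ** int_to_cmat P) = transpose (int_to_rmat P) ** ImMat \<Omega> ** int_to_rmat P"
  by (simp add: vec_eq_iff matrix_matrix_mult_def transpose_def ImMat_def int_to_cmat_def int_to_rmat_def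
      Im_sum Im_ofint_mult sum_distrib_left sum_distrib_right mult_ac)

lemma Im_Ptz: "Im ((transpose (int_to_cmat P) *v z) $ i) = (transpose (int_to_rmat P) *v yv z) $ i"
  by (simp add: matrix_vector_mult_def transpose_def int_to_cmat_def int_to_rmat_def yv_def Im_sum Im_ofint_mult)

lemma nr_mult: "nr (P *v n) = int_to_rmat P *v nr n"
  by (simp add: vec_eq_iff nr_def matrix_vector_mult_def int_to_rmat_def)

lemma dot_mv: "((A::real^'n^'m) *v u) \<bullet> v = u \<bullet> (transpose A *v v)"
proof -
  have "(A *v u) \<bullet> v = (u v* transpose A) \<bullet> v" by simp
  also have "\<dots> = u \<bullet> (transpose A *v v)" by (rule dot_lmul_matrix)
  finally show ?thesis .
qed

definition bl :: "complex^'g \<Rightarrow> complex^'g \<Rightarrow> complex" where "bl u v = (\<Sum>i\<in>UNIV. u$i * v$i)"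

lemma bl_mv: "bl (A *v u) v = bl u (transpose A *v v)"
  unfolding bl_def matrix_vector_mult_def transpose_def
  by (simp add: sum_distrib_left sum_distrib_right mult_ac) (rule sum.swap)

definition nc :: "int^'g \<Rightarrow> complex^'g" where "nc n = (\<chi> i. of_int (n$i))"

lemma nc_mult: "nc (P *v n) = int_to_cmat P *v nc n"
  by (simp add: vec_eq_iff nc_def matrix_vector_mult_def int_to_cmat_def)

lemma ph_bl: "ph \<Omega> z n = (1/2) * bl (nc n) (\<Omega> *v nc n) + bl (nc n) z"
  unfolding ph_def bl_def nc_def matrix_vector_mult_def by (simp add: sum_distrib_left mult_ac)

lemma e_shift: "m \<in> \<int> \<Longrightarrow> e (x + m) = e x"
proof -
  assume m: "m \<in> \<int>"
  then obtain k where k: "m = of_int k" by (auto elim: Ints_cases)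
  have "e (x + m) = e x * exp (of_real (2 * of_int k * pi) * \<i>)"
    by (simp add: e_def k exp_add[symmetric] algebra_simps)
  moreover have "exp (of_real (2 * of_int k * pi) * \<i>) = 1" by (rule exp_integer_2pi) simp
  ultimately show ?thesis by simp
qed

lemma shift:
  fixes P :: "int^'g^'g"
  assumes st: "P_stable P c1 c2 z \<Omega>"
  shows "al \<Omega> z c2 (P *v n) = al \<Omega> z c1 n" and "e (ph \<Omega> z (P *v n)) = e (ph \<Omega> z n)"
proof -
  define Pr where "Pr = int_to_rmat P"
  define Pc where "Pc = int_to_cmat P"
  define M where "M = ImMat \<Omega>"
  have S1: "transpose Pc ** \<Omega> ** Pc = \<Omega>" and S2: "Pr *v c1 = c2"
    and S3: "\<And>i. (transpose Pc *v z - z) $ i \<in> \<int>"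
    using st unfolding P_stable_def Pr_def Pc_def by auto
  have D1: "transpose Pr ** M ** Pr = M"
    using arg_cong[OF S1, of ImMat] unfolding M_def Pr_def Pc_def ImMat_conj by simp
  have D2: "transpose Pr *v yv z = yv z"
  proof (rule vec_eq_iff[THEN iffD2], rule allI)
    fix i
    obtain k where k: "(transpose Pc *v z - z) $ i = of_int k" using S3[of i] by (auto elim: Ints_cases)
    have "(transpose Pc *v z) $ i = (transpose Pc *v z - z) $ i + z $ i" by simp
    then have "Im ((transpose Pc *v z) $ i) = Im (z $ i)" unfolding k by simp
    then show "(transpose Pr *v yv z) $ i = yv z $ i"
      using Im_Ptz[of P z i] unfolding Pc_def Pr_def by (simp add: yv_def)
  qed
  have bil: "(Pr *v a) \<bullet> (M *v (Pr *v b)) = a \<bullet> (M *v b)" for a b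
  proof -
    have "(Pr *v a) \<bullet> (M *v (Pr *v b)) = a \<bullet> (transpose Pr *v (M *v (Pr *v b)))" by (rule dot_mv)
    also have "\<dots> = a \<bullet> ((transpose Pr ** M ** Pr) *v b)" by (simp add: matrix_vector_mul_assoc matrix_mul_assoc)
    finally show ?thesis using D1 by simp
  qed
  have lin: "c2 \<bullet> yv z = c1 \<bullet> yv z"
    unfolding S2[symmetric] dot_mv D2 ..
  have qf: "qform M c2 = qform M c1"
    unfolding qform_eq S2[symmetric] bil ..
  show "al \<Omega> z c2 (P *v n) = al \<Omega> z c1 n"
    unfolding al_def Im_lin nr_mult M_def[symmetric] Pr_def[symmetric] qf
    using bil[of c1 "nr n"] lin by (simp add: S2)
  have nP: "nc (P *v n) = Pc *v nc n" unfolding Pc_def by (rule nc_mult)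
  have q2: "bl (nc (P *v n)) (\<Omega> *v nc (P *v n)) = bl (nc n) (\<Omega> *v nc n)"
    unfolding nP bl_mv by (simp add: matrix_vector_mul_assoc matrix_mul_assoc S1)
  have l2: "bl (nc (P *v n)) z = bl (nc n) z + bl (nc n) (transpose Pc *v z - z)"
  proof -
    have "bl (nc (P *v n)) z = bl (nc n) (transpose Pc *v z)" unfolding nP by (rule bl_mv)
    also have "\<dots> = bl (nc n) z + bl (nc n) (transpose Pc *v z - z)"
      unfolding bl_def by (simp add: right_diff_distrib sum_subtractf)
    finally show ?thesis .
  qed
  have int: "bl (nc n) (transpose Pc *v z - z) \<in> \<int>"
  proof -
    have S3': "(transpose Pc *v z) $ i - z $ i \<in> \<int>" for i using S3[of i] by (simp del: transpose_matrix_vector)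
    show ?thesis unfolding bl_def nc_def by (auto intro!: Ints_sum Ints_mult S3' simp del: transpose_matrix_vector)
  qed
  have "ph \<Omega> z (P *v n) = ph \<Omega> z n + bl (nc n) (transpose Pc *v z - z)"
    unfolding ph_bl q2 l2 by simp
  then show "e (ph \<Omega> z (P *v n)) = e (ph \<Omega> z n)" using e_shift[OF int] by simp
qed

lemma det_map: "det (int_to_rmat A) = real_of_int (det A)"
  unfolding det_def int_to_rmat_def by simp

lemma nr_inj: "nr a = nr b \<Longrightarrow> a = b"
  by (simp add: nr_def vec_eq_iff)

lemma Pbij:
  fixes P :: "int^'g^'g"
  assumes d: "det P = 1 \<or> det P = -1"
  shows "bij_betw (\<lambda>n::int^'g. P *v n) UNIV UNIV"
proof -
  define Pr where "Pr = int_to_rmat P"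
  have dP: "det Pr = of_int (det P)" unfolding Pr_def by (rule det_map)
  have d0: "det Pr \<noteq> 0" using d dP by auto
  have inj: "inj (\<lambda>n::int^'g. P *v n)"
  proof (rule injI)
    fix a b :: "int^'g" assume "P *v a = P *v b"
    then have "Pr *v nr a = Pr *v nr b" unfolding Pr_def by (metis nr_mult)
    then have "nr a = nr b" using cramer[OF d0, of "nr a" "Pr *v nr b"] cramer[OF d0, of "nr b" "Pr *v nr b"] by simp
    then show "a = b" by (rule nr_inj)
  qed
  have surj: "surj (\<lambda>n::int^'g. P *v n)"
  proof (rule surjI)
    fix m :: "int^'g"
    define n where "n = (\<chi> k. det (\<chi> i j. if j = k then m$i else P$i$j) * det P)"
    have "nr n = (\<chi> k. det (\<chi> i j. if j = k then nr m $ i else Pr$i$j) / det Pr)"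
    proof (rule vec_eq_iff[THEN iffD2], rule allI)
      fix k
      have e1: "(\<chi> i j. if j = k then nr m $ i else Pr$i$j) = int_to_rmat (\<chi> i j. if j = k then m$i else P$i$j)"
        by (simp add: vec_eq_iff int_to_rmat_def nr_def Pr_def)
      have "(\<chi> k. det (\<chi> i j. if j = k then nr m $ i else Pr$i$j) / det Pr) $ k = det (\<chi> i j. if j = k then nr m $ i else Pr$i$j) / det Pr"
        by simp
      also have "\<dots> = of_int (det (\<chi> i j. if j = k then m$i else P$i$j)) / of_int (det P)"
        unfolding e1 det_map dP ..
      also have "\<dots> = nr n $ k" using d by (auto simp: nr_def n_def)
      finally show "nr n $ k = (\<chi> k. det (\<chi> i j. if j = k then nr m $ i else Pr$i$j) / det Pr) $ k" ..
    qed
    then have "Pr *v nr n = nr m" using cramer[OF d0, of "nr n" "nr m"] by simp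
    then have "nr (P *v n) = nr m" unfolding nr_mult Pr_def .
    then show "P *v n = m" by (rule nr_inj)
  qed
  show ?thesis using inj surj by (simp add: bij_betw_def)
qed

lemma add_zero_sum:
  fixes f h :: "'a \<Rightarrow> complex"
  assumes h: "h summable_on UNIV" and h0: "infsum h UNIV = 0"
  shows "infsum (\<lambda>n. f n + h n) UNIV = infsum f UNIV"
proof (cases "f summable_on UNIV")
  case True
  then show ?thesis using infsum_add[OF True h] h0 by simp
next
  case False
  have "\<not> (\<lambda>n. f n + h n) summable_on UNIV"
  proof
    assume "(\<lambda>n. f n + h n) summable_on UNIV"
    from summable_on_add[OF this summable_on_uminus[THEN iffD2, OF h]] have "f summable_on UNIV" by simp
    then show False using False by simp
  qed
  then show ?thesis using False by (simp add: infsum_not_exists)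
qed

theorem mainTheorem8:
  fixes P :: "int^'g^'g" and z :: "complex^'g" and \<Omega> :: "complex^'g^'g"
    and c1 c2 :: "real^'g" and r s :: complex
  assumes "det P = 1 \<or> det P = -1"
    and "transpose \<Omega> = \<Omega>"
    and "has_signature (ImMat \<Omega>) (CARD('g) - 1) 1"
    and "qform (ImMat \<Omega>) c1 < 0" and "qform (ImMat \<Omega>) c2 < 0"
    and "P_stable P c1 c2 z \<Omega>"
    and "Re r > -1" and "Re s > -1"
  shows "Theta_r r c1 c2 z \<Omega> = Theta_r s c1 c2 z \<Omega>"
proof -
  note det = assms(1) and sig = assms(3) and q1 = assms(4) and q2 = assms(5) and st = assms(6)
    and r = assms(7) and s = assms(8)
  define T where "T f n = (Ecal f (al \<Omega> z c2 n) - Ecal f (al \<Omega> z c1 n)) * e (ph \<Omega> z n)"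
    for f :: "real \<Rightarrow> complex" and n :: "int^'g"
  have TF: "Theta_f f c1 c2 z \<Omega> = infsum (T f) UNIV" for f
    unfolding Theta_f_def T_def al_def ph_def Let_def ..
  have TR: "Theta_r t c1 c2 z \<Omega> = infsum (\<lambda>n. Kr t * T (\<lambda>u. of_real \<bar>u\<bar> powr t) n) UNIV" for t
    unfolding Theta_r_def TF Kr_def[symmetric] by (rule infsum_cmult_right'[symmetric])
  define A where "A c n = GG r s (al \<Omega> z c n) * e (ph \<Omega> z n)" for c n
  have decomp: "Kr r * T (\<lambda>u. of_real \<bar>u\<bar> powr r) n = Kr s * T (\<lambda>u. of_real \<bar>u\<bar> powr s) n + (A c2 n + - A c1 n)" for n
    unfolding T_def A_def GG_def by (simp add: algebra_simps)
  obtain C where C: "\<And>\<alpha>. norm (GG r s \<alpha>) \<le> C * exp (-(3/4)*pi*\<alpha>^2)"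
    using GG_bound[OF r s] by blast
  have A1: "A c1 summable_on UNIV" unfolding A_def by (rule summ_gen[OF sig q1 C])
  have A2: "A c2 summable_on UNIV" unfolding A_def by (rule summ_gen[OF sig q2 C])
  have sh: "A c2 (P *v n) = A c1 n" for n unfolding A_def using shift[OF st] by simp
  have "infsum (A c2) UNIV = infsum (\<lambda>n. A c2 (P *v n)) UNIV"
    by (rule infsum_reindex_bij_betw[OF Pbij[OF det], symmetric])
  also have "\<dots> = infsum (A c1) UNIV" using sh by simp
  finally have eqs: "infsum (A c2) UNIV = infsum (A c1) UNIV" .
  have Ds: "(\<lambda>n. A c2 n + - A c1 n) summable_on UNIV"
    by (rule summable_on_add[OF A2 summable_on_uminus[THEN iffD2, OF A1]])
  have D0: "infsum (\<lambda>n. A c2 n + - A c1 n) UNIV = 0"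
    using infsum_add[OF A2 summable_on_uminus[THEN iffD2, OF A1]] eqs by (simp add: infsum_uminus)
  have "Theta_r r c1 c2 z \<Omega> = infsum (\<lambda>n. Kr s * T (\<lambda>u. of_real \<bar>u\<bar> powr s) n + (A c2 n + - A c1 n)) UNIV"
    unfolding TR decomp ..
  also have "\<dots> = infsum (\<lambda>n. Kr s * T (\<lambda>u. of_real \<bar>u\<bar> powr s) n) UNIV"
    by (rule add_zero_sum[OF Ds D0])
  also have "\<dots> = Theta_r s c1 c2 z \<Omega>" unfolding TR ..
  finally show ?thesis .
qed

end
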